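(* Let $G$ be an outer-string graph with an outer-string representation $\varphi$, and let $v_i,v_j$ be vertices whose strings intersect. Suppose cops occupy $v_i$ and $v_j$ and the robber occupies a vertex whose string is entirely contained in the bottom region of the pair $(\varphi(v_i),\varphi(v_j))$. Then the robber stays on vertices whose strings lie in this bottom region as long as cops stay on $v_i$ and $v_j$.
   Context: An outer-string representation of $G$ assigns to each vertex a bounded curve (string) in the closed upper half-plane meeting the $x$-axis in exactly one point, an endpoint of the string, with distinct vertices adjacent iff their strings intersect. A pair of intersecting strings divides the upper half-plane into regions: the unbounded top region, the bottom region incident with an interval of the $x$-axis, and possibly middle regions. Game of cops and robber: alternate moves, each piece stays or moves to an adjacent vertex; capture when a cop occupies the robber's vertex (a robber moving to a neighbor of a cop's vertex is captured in the next cop move). *)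

theory Defs
  imports "HOL-Analysis.Analysis"
begin

definition upper_half :: "complex set" where
  "upper_half = {z. Im z \<ge> 0}"

definition is_string :: "(real \<Rightarrow> complex) \<Rightarrow> bool" where
  "is_string g \<longleftrightarrow> path g \<and> path_image g \<subseteq> upper_half \<and>
     (\<exists>p. path_image g \<inter> {z. Im z = 0} = {p} \<and> (p = pathstart g \<or> p = pathfinish g))"

definition base_point :: "(real \<Rightarrow> complex) \<Rightarrow> complex" where
  "base_point g = (THE p. p \<in> path_image g \<and> Im p = 0)"

definition outer_string_rep ::
  "'v set \<Rightarrow> ('v \<Rightarrow> 'v \<Rightarrow> bool) \<Rightarrow> ('v \<Rightarrow> real \<Rightarrow> complex) \<Rightarrow> bool" where
  "outer_string_rep V E \<phi> \<longleftrightarrow>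
     (\<forall>u v. E u v \<longrightarrow> u \<in> V \<and> v \<in> V \<and> u \<noteq> v) \<and>
     (\<forall>v\<in>V. is_string (\<phi> v)) \<and>
     (\<forall>u\<in>V. \<forall>v\<in>V. u \<noteq> v \<longrightarrow> (E u v \<longleftrightarrow> path_image (\<phi> u) \<inter> path_image (\<phi> v) \<noteq> {}))"

text \<open>The bottom region of a pair of strings: the region (connected component of the
  closed upper half-plane minus both strings) incident with the interval of the x-axis
  between the two base points; it is represented by the midpoint of that interval.\<close>
definition bottom_region :: "(real \<Rightarrow> complex) \<Rightarrow> (real \<Rightarrow> complex) \<Rightarrow> complex set" where
  "bottom_region g h =
     connected_component_set (upper_half - (path_image g \<union> path_image h))
       ((base_point g + base_point h) / 2)"

end

theory Submission
  imports Defs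
begin

theorem lemma3:
  fixes V :: "'v set" and E :: "'v \<Rightarrow> 'v \<Rightarrow> bool" and \<phi> :: "'v \<Rightarrow> real \<Rightarrow> complex"
    and vi vj :: 'v and r :: "nat \<Rightarrow> 'v" and n :: nat
  assumes rep: "outer_string_rep V E \<phi>"
    and vi: "vi \<in> V" and vj: "vj \<in> V" and adj: "E vi vj"
    and start_V: "r 0 \<in> V"
    and start: "path_image (\<phi> (r 0)) \<subseteq> bottom_region (\<phi> vi) (\<phi> vj)"
    and moves: "\<forall>k<n. r (Suc k) = r k \<or> E (r k) (r (Suc k))"
    and not_caught: "\<forall>k\<le>n. r k \<noteq> vi \<and> r k \<noteq> vj \<and> \<not> E (r k) vi \<and> \<not> E (r k) vj"
  shows "\<forall>k\<le>n. path_image (\<phi> (r k)) \<subseteq> bottom_region (\<phi> vi) (\<phi> vj)"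
proof -
  have Ed: "\<And>u v. E u v \<Longrightarrow> u \<in> V \<and> v \<in> V \<and> u \<noteq> v"
    and str: "\<And>v. v \<in> V \<Longrightarrow> is_string (\<phi> v)"
    and int: "\<And>u v. u \<in> V \<Longrightarrow> v \<in> V \<Longrightarrow> u \<noteq> v \<Longrightarrow> (E u v \<longleftrightarrow> path_image (\<phi> u) \<inter> path_image (\<phi> v) \<noteq> {})"
    using rep unfolding outer_string_rep_def by blast+
  define T where "T = upper_half - (path_image (\<phi> vi) \<union> path_image (\<phi> vj))"
  define c where "c = (base_point (\<phi> vi) + base_point (\<phi> vj)) / 2"
  have B: "bottom_region (\<phi> vi) (\<phi> vj) = connected_component_set T c"
    unfolding bottom_region_def T_def c_def by simp
  show ?thesis
  proof (intro allI impI)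
    fix k assume "k \<le> n"
    then show "path_image (\<phi> (r k)) \<subseteq> bottom_region (\<phi> vi) (\<phi> vj)"
    proof (induction k)
      case 0 then show ?case using start by simp
    next
      case (Suc k)
      have IH: "path_image (\<phi> (r k)) \<subseteq> connected_component_set T c"
        using Suc B by simp
      have mv: "r (Suc k) = r k \<or> E (r k) (r (Suc k))" using moves Suc.prems by simp
      show ?case
      proof (cases "r (Suc k) = r k")
        case True then show ?thesis using IH B by simp
      next
        case False
        with mv have e: "E (r k) (r (Suc k))" by simp
        have rk: "r k \<in> V" and rs: "r (Suc k) \<in> V" and ne: "r k \<noteq> r (Suc k)"
          using Ed[OF e] by auto
        obtain x where x1: "x \<in> path_image (\<phi> (r k))" and x2: "x \<in> path_image (\<phi> (r (Suc k)))"
          using int[OF rk rs ne] e by blast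
        have nc: "r (Suc k) \<noteq> vi" "r (Suc k) \<noteq> vj" "\<not> E (r (Suc k)) vi" "\<not> E (r (Suc k)) vj"
          using not_caught Suc.prems by blast+
        have d1: "path_image (\<phi> (r (Suc k))) \<inter> path_image (\<phi> vi) = {}"
          using int[OF rs vi nc(1)] nc(3) by blast
        have d2: "path_image (\<phi> (r (Suc k))) \<inter> path_image (\<phi> vj) = {}"
          using int[OF rs vj nc(2)] nc(4) by blast
        have s: "is_string (\<phi> (r (Suc k)))" using str[OF rs] .
        have up: "path_image (\<phi> (r (Suc k))) \<subseteq> upper_half" and pth: "path (\<phi> (r (Suc k)))"
          using s unfolding is_string_def by auto
        have sub: "path_image (\<phi> (r (Suc k))) \<subseteq> T" unfolding T_def using up d1 d2 by blast
        have conn: "connected (path_image (\<phi> (r (Suc k))))"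
          using pth by (simp add: connected_path_image)
        have "path_image (\<phi> (r (Suc k))) \<subseteq> connected_component_set T x"
          by (rule connected_component_maximal[OF x2 conn sub])
        moreover have "x \<in> connected_component_set T c" using IH x1 by blast
        hence "connected_component_set T x = connected_component_set T c"
          by (simp add: connected_component_eq)
        ultimately show ?thesis using B by simp
      qed
    qed
  qed
qed

end
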